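(* Let $n\ge1$, let $w_{ij}$ ($i=1,2$, $j=1,\dots,n$) be nonzero integers and $\varepsilon_1,\varepsilon_2\in\{1,-1\}$, and suppose that for all complex numbers $x,y$ the rational function $$T^W_{x,y}(z)=\sum_{i=1}^2\varepsilon_i\prod_{j=1}^n\frac{xz^{w_{ij}}+y}{z^{w_{ij}}-1}$$ does not depend on $z$. Then, up to permuting the entries within each row and interchanging the two rows, exactly one of the following holds: (Z) $w_{1j}=w_{2j}$ for all $j=1,\dots,n$, and $\varepsilon_1=-\varepsilon_2$; (L$_1$) $n=1$, $w_{11}=a$, $w_{21}=-a$ for some positive integer $a$, and $\varepsilon_1=\varepsilon_2$; (S$_3$) $n=3$, $(w_{11},w_{12},w_{13})=(a,b,-(a+b))=-(w_{21},w_{22},w_{23})$ for some positive integers $a,b$, and $\varepsilon_1=\varepsilon_2$. *)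

theory Defs
  imports Complex_Main "HOL-Combinatorics.Permutations"
begin

definition T_W :: "nat \<Rightarrow> (nat \<Rightarrow> nat \<Rightarrow> int) \<Rightarrow> (nat \<Rightarrow> int) \<Rightarrow> complex \<Rightarrow> complex \<Rightarrow> complex \<Rightarrow> complex" where
  "T_W n w eps x y z =
     (\<Sum>i\<in>{1,2::nat}. of_int (eps i) *
        (\<Prod>j\<in>{1..n}. (x * z powi w i j + y) / (z powi w i j - 1)))"

text \<open>T_W (as a rational function in z) does not depend on z: it is constant
  on its domain, i.e. on all z with z \<noteq> 0 and z^(w i j) \<noteq> 1 for all i, j.\<close>
definition T_const :: "nat \<Rightarrow> (nat \<Rightarrow> nat \<Rightarrow> int) \<Rightarrow> (nat \<Rightarrow> int) \<Rightarrow> complex \<Rightarrow> complex \<Rightarrow> bool" where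
  "T_const n w eps x y \<longleftrightarrow>
     (\<exists>c. \<forall>z. z \<noteq> 0 \<and> (\<forall>i\<in>{1,2}. \<forall>j\<in>{1..n}. z powi w i j \<noteq> 1) \<longrightarrow> T_W n w eps x y z = c)"

definition rearr :: "nat \<Rightarrow> (nat \<Rightarrow> nat \<Rightarrow> int) \<Rightarrow> (nat \<Rightarrow> int) \<Rightarrow> (nat \<Rightarrow> nat \<Rightarrow> int) \<Rightarrow> (nat \<Rightarrow> int) \<Rightarrow> bool" where
  "rearr n w eps w' eps' \<longleftrightarrow>
     (\<exists>\<tau> \<sigma>. \<tau> permutes {1,2::nat} \<and> (\<forall>i\<in>{1,2}. \<sigma> i permutes {1..n}) \<and>
        (\<forall>i\<in>{1,2}. \<forall>j\<in>{1..n}. w' i j = w (\<tau> i) (\<sigma> (\<tau> i) j)) \<and>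
        (\<forall>i\<in>{1,2}. eps' i = eps (\<tau> i)))"

definition case_Z :: "nat \<Rightarrow> (nat \<Rightarrow> nat \<Rightarrow> int) \<Rightarrow> (nat \<Rightarrow> int) \<Rightarrow> bool" where
  "case_Z n w eps \<longleftrightarrow> (\<exists>w' eps'. rearr n w eps w' eps' \<and>
     (\<forall>j\<in>{1..n}. w' 1 j = w' 2 j) \<and> eps' 1 = - eps' 2)"

definition case_L1 :: "nat \<Rightarrow> (nat \<Rightarrow> nat \<Rightarrow> int) \<Rightarrow> (nat \<Rightarrow> int) \<Rightarrow> bool" where
  "case_L1 n w eps \<longleftrightarrow> n = 1 \<and> (\<exists>w' eps'. rearr n w eps w' eps' \<and>
     (\<exists>a::int. a > 0 \<and> w' 1 1 = a \<and> w' 2 1 = - a) \<and> eps' 1 = eps' 2)"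

definition case_S3 :: "nat \<Rightarrow> (nat \<Rightarrow> nat \<Rightarrow> int) \<Rightarrow> (nat \<Rightarrow> int) \<Rightarrow> bool" where
  "case_S3 n w eps \<longleftrightarrow> n = 3 \<and> (\<exists>w' eps'. rearr n w eps w' eps' \<and>
     (\<exists>a b::int. a > 0 \<and> b > 0 \<and>
        w' 1 1 = a \<and> w' 1 2 = b \<and> w' 1 3 = - (a + b) \<and>
        w' 2 1 = - a \<and> w' 2 2 = - b \<and> w' 2 3 = a + b) \<and> eps' 1 = eps' 2)"

end

theory Submission
  imports Defs "HOL-Analysis.Analysis"
begin

definition Rr :: "nat \<Rightarrow> (nat \<Rightarrow> int) \<Rightarrow> complex \<Rightarrow> complex \<Rightarrow> complex" where
  "Rr n u z r = (\<Prod>j\<in>{1..n}. (z powi u j - r) / (z powi u j - 1))"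

definition qc :: "nat \<Rightarrow> (nat \<Rightarrow> int) \<Rightarrow> nat" where
  "qc n u = card {j\<in>{1..n}. u j < 0}"

definition dm :: "nat \<Rightarrow> (nat \<Rightarrow> int) \<Rightarrow> (nat \<Rightarrow> int) \<Rightarrow> complex \<Rightarrow> bool" where
  "dm n u v z \<longleftrightarrow> z \<noteq> 0 \<and> (\<forall>j\<in>{1..n}. z powi u j \<noteq> 1 \<and> z powi v j \<noteq> 1)"

lemma T_Rr: "T_W n w eps 1 (-r) z = of_int (eps 1) * Rr n (w 1) z r + of_int (eps 2) * Rr n (w 2) z r"
  by (simp add: T_W_def Rr_def)

lemma real_powi_ne1:
  fixes x :: real
  assumes "x > 1" "k \<noteq> 0"
  shows "x powi k \<noteq> 1"
proof (cases "k > 0")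
  case True
  then have "x powi k = x ^ nat k" by (simp add: power_int_def)
  moreover have "x ^ nat k > 1" using assms True by (simp add: one_less_power)
  ultimately show ?thesis by simp
next
  case False
  then have "x powi k = inverse (x ^ nat (-k))" using assms
    by (simp add: power_int_def power_inverse)
  moreover have "x ^ nat (-k) > 1" using assms False by (simp add: one_less_power)
  ultimately show ?thesis by (simp add: inverse_eq_divide)
qed

lemma dm_real:
  assumes "x > 1" "\<forall>j\<in>{1..n}. u j \<noteq> 0 \<and> v j \<noteq> 0"
  shows "dm n u v (of_real x)"
proof -
  have "(of_real x :: complex) powi k \<noteq> 1" if "k \<noteq> 0" for k
  proof
    assume "(of_real x :: complex) powi k = 1"
    then have "of_real (x powi k) = (1::complex)" by (simp add: of_real_power_int)
    then have "x powi k = 1" using of_real_eq_1_iff by blast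
    with real_powi_ne1[OF assms(1) that] show False by simp
  qed
  then show ?thesis using assms unfolding dm_def by auto
qed

lemma dm_T: "dm n (w 1) (w 2) z \<longleftrightarrow> z \<noteq> 0 \<and> (\<forall>i\<in>{1,2}. \<forall>j\<in>{1..n}. z powi w i j \<noteq> 1)"
  unfolding dm_def by auto

lemma lim_factor:
  assumes "k \<noteq> 0"
  shows "((\<lambda>x::real. ((of_real x :: complex) powi k - r) / (of_real x powi k - 1)) \<longlongrightarrow> (if k < 0 then r else 1)) at_top"
proof (cases "k > 0")
  case True
  define m where "m = nat k"
  have m: "m > 0" using True m_def by simp
  have "LIM x at_top. (x::real) ^ m :> at_top"
    by (rule filterlim_pow_at_top[OF m filterlim_ident])
  from filterlim_tendsto_add_at_top[OF tendsto_const[of "-1"] this]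
  have "LIM x at_top. -1 + (x::real) ^ m :> at_top" .
  moreover have "(\<lambda>x::real. -1 + x ^ m) = (\<lambda>x. x ^ m - 1)" by auto
  ultimately have lim1: "LIM x at_top. (x::real) ^ m - 1 :> at_top" by simp
  have "((\<lambda>x::real. inverse (x ^ m - 1)) \<longlongrightarrow> 0) at_top"
    using tendsto_inverse_0_at_top[OF lim1] .
  then have "((\<lambda>x::real. of_real (inverse (x ^ m - 1)) :: complex) \<longlongrightarrow> of_real 0) at_top"
    by (rule tendsto_of_real)
  then have L: "((\<lambda>x::real. 1 + (1 - r) * of_real (inverse (x ^ m - 1)) :: complex) \<longlongrightarrow> 1 + (1 - r) * 0) at_top"
    by (intro tendsto_intros) auto
  have ev: "eventually (\<lambda>x::real. 1 + (1 - r) * of_real (inverse (x ^ m - 1)) = ((of_real x :: complex) powi k - r) / (of_real x powi k - 1)) at_top"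
    using eventually_gt_at_top[of 1]
  proof eventually_elim
    case (elim x)
    have xm: "x ^ m > 1" using elim m by (simp add: one_less_power)
    have eqk: "(of_real x :: complex) powi k = of_real (x ^ m)"
      using True by (simp add: m_def power_int_def)
    have ne: "(of_real (x ^ m) :: complex) \<noteq> 1"
    proof
      assume "(of_real (x ^ m) :: complex) = 1"
      then have "x ^ m = 1" using of_real_eq_1_iff by blast
      with xm show False by simp
    qed
    have aux: "a \<noteq> 1 \<Longrightarrow> 1 + (1 - r) * inverse (a - 1) = (a - r) / (a - 1)" for a :: complex
      by (simp add: field_simps)
    have "(of_real (inverse (x ^ m - 1)) :: complex) = inverse (of_real (x ^ m) - 1)"
      by (simp only: of_real_inverse of_real_diff of_real_1)
    then show ?case unfolding eqk using aux[OF ne] by simp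
  qed
  from tendsto_cong[OF ev] L show ?thesis using True by simp
next
  case False
  define m where "m = nat (-k)"
  have m: "m > 0" using False assms m_def by simp
  have "((\<lambda>x::real. inverse (x ^ m)) \<longlongrightarrow> 0) at_top"
    by (rule tendsto_inverse_0_at_top) (auto intro: filterlim_pow_at_top filterlim_ident simp: m)
  then have "((\<lambda>x::real. of_real (inverse (x ^ m)) :: complex) \<longlongrightarrow> of_real 0) at_top"
    by (rule tendsto_of_real)
  then have L: "((\<lambda>x::real. (of_real (inverse (x ^ m)) - r) / (of_real (inverse (x ^ m)) - 1) :: complex) \<longlongrightarrow> (0 - r) / (0 - 1)) at_top"
    by (intro tendsto_intros) auto
  have eq: "(of_real x :: complex) powi k = of_real (inverse (x ^ m))" for x
    using False assms by (simp add: m_def power_int_def of_real_inverse power_inverse)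
  show ?thesis using L False assms by (simp add: eq)
qed

lemma lim_Rr:
  assumes "\<forall>j\<in>{1..n}. u j \<noteq> 0"
  shows "((\<lambda>x::real. Rr n u (of_real x) r) \<longlongrightarrow> r ^ qc n u) at_top"
proof -
  have "((\<lambda>x::real. Rr n u (of_real x) r) \<longlongrightarrow> (\<Prod>j\<in>{1..n}. (if u j < 0 then r else 1))) at_top"
    unfolding Rr_def using assms by (intro tendsto_prod lim_factor) auto
  moreover have "(\<Prod>j\<in>{1..n}. (if u j < 0 then r else 1)) = r ^ qc n u"
    unfolding qc_def by (simp add: prod.inter_filter[symmetric])
  ultimately show ?thesis by simp
qed

lemma Rr_inv:
  "Rr n u (of_real (inverse x)) r = Rr n (\<lambda>j. - u j) (of_real x) r"
  unfolding Rr_def by (simp add: of_real_inverse power_int_minus power_int_inverse)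

lemma Rr_inv':
  "Rr n u (inverse z) r = Rr n (\<lambda>j. - u j) z r"
  unfolding Rr_def by (simp add: power_int_minus power_int_inverse)

lemma qc_neg:
  assumes "\<forall>j\<in>{1..n}. u j \<noteq> 0"
  shows "qc n (\<lambda>j. - u j) = n - qc n u"
proof -
  have "{j\<in>{1..n}. - u j < 0} = {1..n} - {j\<in>{1..n}. u j < 0}" using assms by force
  moreover have "card ({1..n} - {j\<in>{1..n}. u j < 0}) = n - card {j\<in>{1..n}. u j < 0}"
    by (subst card_Diff_subset) auto
  ultimately show ?thesis unfolding qc_def by simp
qed

lemma dm_inverse: "dm n u v z \<Longrightarrow> dm n u v (inverse z)"
  unfolding dm_def by (auto simp: power_int_inverse)

lemma c_formula_gen:
  assumes nz: "\<forall>i\<in>{1,2}. \<forall>j\<in>{1..n}. w i j \<noteq> 0" and hyp: "T_const n w eps 1 (-r)"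
  shows "\<exists>c. (\<forall>z. dm n (w 1) (w 2) z \<longrightarrow>
           of_int (eps 1) * Rr n (w 1) z r + of_int (eps 2) * Rr n (w 2) z r = c)
        \<and> c = of_int (eps 1) * r ^ qc n (w 1) + of_int (eps 2) * r ^ qc n (w 2)
        \<and> c = of_int (eps 1) * r ^ (n - qc n (w 1)) + of_int (eps 2) * r ^ (n - qc n (w 2))"
proof -
  from hyp obtain c where c: "\<forall>z. z \<noteq> 0 \<and> (\<forall>i\<in>{1,2}. \<forall>j\<in>{1..n}. z powi w i j \<noteq> 1) \<longrightarrow> T_W n w eps 1 (-r) z = c"
    unfolding T_const_def by blast
  have cz: "of_int (eps 1) * Rr n (w 1) z r + of_int (eps 2) * Rr n (w 2) z r = c"
    if "dm n (w 1) (w 2) z" for z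
  proof -
    have "z \<noteq> 0 \<and> (\<forall>i\<in>{1,2}. \<forall>j\<in>{1..n}. z powi w i j \<noteq> 1)" using that dm_T by blast
    then have "T_W n w eps 1 (-r) z = c" using c by blast
    then show ?thesis by (simp add: T_Rr)
  qed
  have nz1: "\<forall>j\<in>{1..n}. w 1 j \<noteq> 0" and nz2: "\<forall>j\<in>{1..n}. w 2 j \<noteq> 0" using nz by auto
  have nzn1: "\<forall>j\<in>{1..n}. - w 1 j \<noteq> 0" and nzn2: "\<forall>j\<in>{1..n}. - w 2 j \<noteq> 0" using nz by auto
  have dmx: "dm n (w 1) (w 2) (of_real x)" if "x > 1" for x
    using dm_real[OF that] nz by auto
  have ev: "eventually (\<lambda>x::real. of_int (eps 1) * Rr n (w 1) (of_real x) r + of_int (eps 2) * Rr n (w 2) (of_real x) r = c) at_top"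
    using eventually_gt_at_top[of 1] by eventually_elim (rule cz, rule dmx)
  have L: "((\<lambda>x::real. of_int (eps 1) * Rr n (w 1) (of_real x) r + of_int (eps 2) * Rr n (w 2) (of_real x) r)
      \<longlongrightarrow> of_int (eps 1) * r ^ qc n (w 1) + of_int (eps 2) * r ^ qc n (w 2)) at_top"
    by (intro tendsto_intros lim_Rr nz1 nz2)
  have c1: "c = of_int (eps 1) * r ^ qc n (w 1) + of_int (eps 2) * r ^ qc n (w 2)"
    using tendsto_cong[OF ev] L by (simp add: tendsto_const_iff)
  have ev2: "eventually (\<lambda>x::real. of_int (eps 1) * Rr n (\<lambda>j. - w 1 j) (of_real x) r + of_int (eps 2) * Rr n (\<lambda>j. - w 2 j) (of_real x) r = c) at_top"
    using eventually_gt_at_top[of 1]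
  proof eventually_elim
    case (elim x)
    have "dm n (w 1) (w 2) (of_real (inverse x))"
      using dm_inverse[OF dmx[OF elim]] by (simp add: of_real_inverse)
    from cz[OF this] show ?case by (simp add: Rr_inv' of_real_inverse)
  qed
  have L2: "((\<lambda>x::real. of_int (eps 1) * Rr n (\<lambda>j. - w 1 j) (of_real x) r + of_int (eps 2) * Rr n (\<lambda>j. - w 2 j) (of_real x) r)
      \<longlongrightarrow> of_int (eps 1) * r ^ qc n (\<lambda>j. - w 1 j) + of_int (eps 2) * r ^ qc n (\<lambda>j. - w 2 j)) at_top"
    by (intro tendsto_intros lim_Rr nzn1 nzn2)
  have c2: "c = of_int (eps 1) * r ^ (n - qc n (w 1)) + of_int (eps 2) * r ^ (n - qc n (w 2))"
    using tendsto_cong[OF ev2] L2 unfolding qc_neg[OF nz1] qc_neg[OF nz2] by (simp add: tendsto_const_iff)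
  show ?thesis using cz c1 c2 by blast
qed

lemma monom_coeffs:
  fixes a b c d :: complex
  assumes "\<forall>r. a * r ^ i + b * r ^ j = c * r ^ k + d * r ^ l"
  shows "(if i = m then a else 0) + (if j = m then b else 0) = (if k = m then c else 0) + (if l = m then d else 0)"
proof -
  let ?p = "monom a i + monom b j - monom c k - monom d l"
  have "\<forall>r. poly ?p r = 0" using assms by (simp add: poly_monom)
  then have "?p = 0" using poly_all_0_iff_0 by blast
  then have "coeff ?p m = 0" by simp
  then have "(if i=m then a else 0) + (if j=m then b else 0) - (if k=m then c else 0) - (if l=m then d else 0) = 0"
    by (simp only: coeff_add coeff_diff coeff_monom)
  then show ?thesis by (metis diff_diff_eq eq_iff_diff_eq_0)
qed

lemma ind_eq_same:
  fixes a :: complex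
  assumes "a \<noteq> 0" "(if P then a else 0) + (if Q then a else 0) = (if R then a else 0) + (if S then a else 0)"
  shows "of_bool P + of_bool Q = (of_bool R + of_bool S :: nat)"
proof -
  have "a + a \<noteq> a" "a + a \<noteq> 0" using assms(1) by (auto simp: mult_2[symmetric])
  then show ?thesis using assms(2) by (cases P; cases Q; cases R; cases S) auto
qed

lemma ind_eq_opp:
  fixes a :: complex
  assumes "a \<noteq> 0" "(if P then a else 0) + (if Q then -a else 0) = (if R then a else 0) + (if S then -a else 0)"
  shows "of_bool P + of_bool S = (of_bool R + of_bool Q :: nat)"
proof -
  have "a + a \<noteq> 0" "a \<noteq> -a" "-a \<noteq> a" "a - a = 0" using assms(1) by (auto simp: mult_2[symmetric])
  then show ?thesis using assms(2) by (cases P; cases Q; cases R; cases S) auto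
qed

lemma q_rel:
  assumes nz: "\<forall>i\<in>{1,2}. \<forall>j\<in>{1..n}. w i j \<noteq> 0" and hyp: "\<forall>x y. T_const n w eps x y"
    and e: "\<forall>i\<in>{1,2}. eps i \<in> {1, -1}"
  shows "(eps 2 = - eps 1 \<longrightarrow> qc n (w 1) = qc n (w 2)) \<and> (eps 2 = eps 1 \<longrightarrow> qc n (w 1) + qc n (w 2) = n)"
proof -
  let ?q1 = "qc n (w 1)" and ?q2 = "qc n (w 2)"
  have "card {j\<in>{1..n}. w 1 j < 0} \<le> card {1..n}" by (rule card_mono) auto
  then have le1: "?q1 \<le> n" unfolding qc_def by simp
  have "card {j\<in>{1..n}. w 2 j < 0} \<le> card {1..n}" by (rule card_mono) auto
  then have le2: "?q2 \<le> n" unfolding qc_def by simp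
  have R: "\<forall>r::complex. of_int (eps 1) * r ^ ?q1 + of_int (eps 2) * r ^ ?q2
          = of_int (eps 1) * r ^ (n - ?q1) + of_int (eps 2) * r ^ (n - ?q2)"
  proof
    fix r :: complex
    have "T_const n w eps 1 (-r)" using hyp by blast
    from c_formula_gen[OF nz this] show "of_int (eps 1) * r ^ ?q1 + of_int (eps 2) * r ^ ?q2
          = of_int (eps 1) * r ^ (n - ?q1) + of_int (eps 2) * r ^ (n - ?q2)" by auto
  qed
  note M = monom_coeffs[OF R]
  have e1: "(of_int (eps 1) :: complex) \<noteq> 0" using e by auto
  show ?thesis
  proof (intro conjI impI)
    assume e2: "eps 2 = - eps 1"
    have I: "of_bool (?q1 = m) + of_bool (n - ?q2 = m) = (of_bool (n - ?q1 = m) + of_bool (?q2 = m) :: nat)" for m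
    proof -
      have "(if ?q1 = m then of_int (eps 1) else 0) + (if ?q2 = m then - of_int (eps 1) else 0)
          = (if n - ?q1 = m then of_int (eps 1) else 0) + (if n - ?q2 = m then - of_int (eps 1) else (0::complex))"
        using M[of m] unfolding e2 of_int_minus by assumption
      from ind_eq_opp[OF e1 this] show ?thesis .
    qed
    show "?q1 = ?q2"
    proof (rule ccontr)
      assume ne: "?q1 \<noteq> ?q2"
      have A: "n - ?q1 = ?q1" using I[of ?q1] ne by (auto simp: of_bool_def split: if_splits)
      have B: "n - ?q2 = ?q2" using I[of ?q2] ne by (auto simp: of_bool_def split: if_splits)
      from A B le1 le2 ne show False by linarith
    qed
  next
    assume e2: "eps 2 = eps 1"
    have I: "of_bool (?q1 = m) + of_bool (?q2 = m) = (of_bool (n - ?q1 = m) + of_bool (n - ?q2 = m) :: nat)" for m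
    proof -
      have "(if ?q1 = m then of_int (eps 1) else 0) + (if ?q2 = m then of_int (eps 1) else 0)
          = (if n - ?q1 = m then of_int (eps 1) else 0) + (if n - ?q2 = m then of_int (eps 1) else (0::complex))"
        using M[of m] unfolding e2 of_int_minus by assumption
      from ind_eq_same[OF e1 this] show ?thesis .
    qed
    have "n - ?q1 = ?q1 \<or> n - ?q2 = ?q1" using I[of ?q1] by (auto simp: of_bool_def split: if_splits)
    moreover have "n - ?q1 = ?q2 \<or> n - ?q2 = ?q2" using I[of ?q2] by (auto simp: of_bool_def split: if_splits)
    ultimately show "?q1 + ?q2 = n" using le1 le2 by linarith
  qed
qed

lemma prod_lin_coeffs:
  fixes c :: "nat \<Rightarrow> complex"
  assumes "finite J"
  shows "coeff (\<Prod>j\<in>J. [:c j, -1:]) (card J) = (-1) ^ card J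
       \<and> (\<forall>k > card J. coeff (\<Prod>j\<in>J. [:c j, -1:]) k = 0)
       \<and> (J \<noteq> {} \<longrightarrow> coeff (\<Prod>j\<in>J. [:c j, -1:]) (card J - 1) = (-1) ^ (card J - 1) * (\<Sum>j\<in>J. c j))"
  using assms
proof (induction J rule: finite_induct)
  case empty
  then show ?case by (simp add: coeff_1)
next
  case (insert a J)
  define p where "p = (\<Prod>j\<in>J. [:c j, -1:])"
  define m where "m = card J"
  have eq: "(\<Prod>j\<in>insert a J. [:c j, -1:]) = [:c a, -1:] * p" using insert by (simp add: p_def)
  have cf: "coeff ([:c a, -1:] * p) (Suc k) = c a * coeff p (Suc k) - coeff p k" for k
    by (simp add: mult_pCons_left)
  have cf0: "coeff ([:c a, -1:] * p) 0 = c a * coeff p 0"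
    by (simp add: mult_pCons_left)
  have cardi: "card (insert a J) = Suc m" using insert by (simp add: m_def)
  have IH1: "coeff p m = (-1) ^ m" and IH2: "\<forall>k > m. coeff p k = 0"
    and IH3: "J \<noteq> {} \<longrightarrow> coeff p (m - 1) = (-1) ^ (m - 1) * (\<Sum>j\<in>J. c j)"
    using insert.IH by (simp_all add: p_def m_def)
  have A: "coeff ([:c a, -1:] * p) (Suc m) = (-1) ^ Suc m"
    using cf[of m] IH1 IH2 by simp
  have B: "\<forall>k > Suc m. coeff ([:c a, -1:] * p) k = 0"
  proof (intro allI impI)
    fix k assume "k > Suc m"
    then obtain k' where k': "k = Suc k'" "k' > m" by (cases k) auto
    then show "coeff ([:c a, -1:] * p) k = 0" using cf[of k'] IH2 by simp
  qed
  have Cc: "coeff ([:c a, -1:] * p) m = (-1) ^ m * (\<Sum>j\<in>insert a J. c j)"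
  proof (cases "J = {}")
    case True
    then have "m = 0" "p = 1" by (simp_all add: m_def p_def)
    then show ?thesis using cf0 True by simp
  next
    case False
    then have "m > 0" using insert.hyps(1) by (simp add: m_def card_gt_0_iff)
    then obtain m' where m': "m = Suc m'" by (cases m) auto
    have "coeff ([:c a, -1:] * p) m = c a * coeff p (Suc m') - coeff p m'" using cf[of m'] m' by simp
    also have "\<dots> = c a * (-1) ^ m - (-1) ^ m' * (\<Sum>j\<in>J. c j)"
      using IH1 IH3 False m' by simp
    also have "\<dots> = (-1) ^ m * (c a + (\<Sum>j\<in>J. c j))" using m' by (simp add: algebra_simps)
    also have "\<dots> = (-1) ^ m * (\<Sum>j\<in>insert a J. c j)" using insert by simp
    finally show ?thesis .
  qed
  show ?case unfolding eq cardi using A B Cc by simp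
qed

lemma diff2_eq: "(a::complex) - b - c = 0 \<Longrightarrow> a = b + c"
  by (simp only: diff_diff_eq right_minus_eq)

lemma coeff_ident:
  fixes e1 e2 :: complex and u v :: "nat \<Rightarrow> int"
  assumes n1: "n \<ge> 1" and dz: "dm n u v z"
    and H: "\<forall>r. e1 * Rr n u z r + e2 * Rr n v z r = e1 * r ^ q1 + e2 * r ^ q2"
  shows "e1 / (\<Prod>j\<in>{1..n}. z powi u j - 1) * (-1) ^ n + e2 / (\<Prod>j\<in>{1..n}. z powi v j - 1) * (-1) ^ n
          = (if q1 = n then e1 else 0) + (if q2 = n then e2 else 0)"
    and "e1 / (\<Prod>j\<in>{1..n}. z powi u j - 1) * ((-1) ^ (n - 1) * (\<Sum>j\<in>{1..n}. z powi u j))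
          + e2 / (\<Prod>j\<in>{1..n}. z powi v j - 1) * ((-1) ^ (n - 1) * (\<Sum>j\<in>{1..n}. z powi v j))
          = (if q1 = n - 1 then e1 else 0) + (if q2 = n - 1 then e2 else 0)"
proof -
  define D1 where "D1 = (\<Prod>j\<in>{1..n}. z powi u j - 1)"
  define D2 where "D2 = (\<Prod>j\<in>{1..n}. z powi v j - 1)"
  define p1 where "p1 = (\<Prod>j\<in>{1..n}. [:z powi u j, -1:])"
  define p2 where "p2 = (\<Prod>j\<in>{1..n}. [:z powi v j, -1:])"
  have R1: "Rr n u z r = poly p1 r / D1" for r
    unfolding Rr_def p1_def D1_def poly_prod by (simp add: prod_dividef)
  have R2: "Rr n v z r = poly p2 r / D2" for r
    unfolding Rr_def p2_def D2_def poly_prod by (simp add: prod_dividef)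
  define P where "P = smult (e1 / D1) p1 + smult (e2 / D2) p2 - monom e1 q1 - monom e2 q2"
  have "\<forall>r. poly P r = 0"
    using H unfolding P_def R1 R2 by (simp add: poly_monom field_simps)
  then have P0: "P = 0" using poly_all_0_iff_0 by blast
  have ne: "{1..n} \<noteq> ({}::nat set)" using n1 by simp
  have c1: "coeff p1 n = (-1) ^ n" "coeff p1 (n - 1) = (-1) ^ (n - 1) * (\<Sum>j\<in>{1..n}. z powi u j)"
    using prod_lin_coeffs[of "{1..n}" "\<lambda>j. z powi u j"] ne unfolding p1_def by simp_all
  have c2: "coeff p2 n = (-1) ^ n" "coeff p2 (n - 1) = (-1) ^ (n - 1) * (\<Sum>j\<in>{1..n}. z powi v j)"
    using prod_lin_coeffs[of "{1..n}" "\<lambda>j. z powi v j"] ne unfolding p2_def by simp_all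
  have "coeff P n = 0" using P0 by simp
  then have "e1 / D1 * (-1) ^ n + e2 / D2 * (-1) ^ n - (if q1 = n then e1 else 0) - (if q2 = n then e2 else 0) = 0"
    unfolding P_def by (simp only: coeff_add coeff_diff coeff_smult coeff_monom c1 c2)
  then show "e1 / (\<Prod>j\<in>{1..n}. z powi u j - 1) * (-1) ^ n + e2 / (\<Prod>j\<in>{1..n}. z powi v j - 1) * (-1) ^ n
          = (if q1 = n then e1 else 0) + (if q2 = n then e2 else 0)"
    unfolding D1_def D2_def by (rule diff2_eq)
  have "coeff P (n - 1) = 0" using P0 by simp
  then have "e1 / D1 * ((-1) ^ (n - 1) * (\<Sum>j\<in>{1..n}. z powi u j)) + e2 / D2 * ((-1) ^ (n - 1) * (\<Sum>j\<in>{1..n}. z powi v j))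
     - (if q1 = n - 1 then e1 else 0) - (if q2 = n - 1 then e2 else 0) = 0"
    unfolding P_def by (simp only: coeff_add coeff_diff coeff_smult coeff_monom c1 c2)
  then show "e1 / (\<Prod>j\<in>{1..n}. z powi u j - 1) * ((-1) ^ (n - 1) * (\<Sum>j\<in>{1..n}. z powi u j))
          + e2 / (\<Prod>j\<in>{1..n}. z powi v j - 1) * ((-1) ^ (n - 1) * (\<Sum>j\<in>{1..n}. z powi v j))
          = (if q1 = n - 1 then e1 else 0) + (if q2 = n - 1 then e2 else 0)"
    unfolding D1_def D2_def by (rule diff2_eq)
qed

lemma mem_le_sum_mset_nat: "x \<in># M \<Longrightarrow> (f x :: nat) \<le> (\<Sum>e\<in>#M. f e)"
proof -
  assume "x \<in># M"
  then obtain M' where "M = add_mset x M'" by (metis multi_member_split)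
  then show ?thesis by simp
qed

lemma powi_shift:
  fixes x :: complex
  assumes "x \<noteq> 0" "e + int N \<ge> 0"
  shows "x ^ nat (e + int N) = x ^ N * x powi e"
proof -
  have i: "int (nat (e + int N)) = e + int N" using assms(2) by simp
  have "x powi (e + int N) = x ^ nat (e + int N)" by (metis i power_int_of_nat)
  moreover have "x powi (e + int N) = x powi e * x ^ N" using assms(1) by (simp add: power_int_add)
  ultimately show ?thesis by (simp add: mult.commute)
qed

lemma mset_exps_eq:
  fixes E F :: "int multiset"
  assumes H: "\<forall>x::real. x > 1 \<longrightarrow> (\<Sum>e\<in>#E. (of_real x :: complex) powi e) = (\<Sum>e\<in>#F. (of_real x :: complex) powi e)"
  shows "E = F"
proof -
  define N :: nat where "N = (\<Sum>e\<in>#E+F. nat \<bar>e\<bar>)"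
  have Nle: "e + int N \<ge> 0" if "e \<in># E + F" for e
  proof -
    have "nat \<bar>e\<bar> \<le> N" unfolding N_def by (rule mem_le_sum_mset_nat[OF that])
    then show ?thesis by linarith
  qed
  define P where "P M = (\<Sum>e\<in>#M. monom (1::complex) (nat (e + int N)))" for M
  have polyP: "poly (P M) x = x ^ N * (\<Sum>e\<in>#M. x powi e)"
    if "\<forall>e\<in>#M. e + int N \<ge> 0" "x \<noteq> 0" for M x
    using that(1)
  proof (induction M)
    case empty
    then show ?case by (simp add: P_def)
  next
    case (add a M)
    have "P (add_mset a M) = monom 1 (nat (a + int N)) + P M" by (simp add: P_def)
    then show ?case using add powi_shift[OF that(2), of a N]
      by (simp add: poly_monom algebra_simps)
  qed
  have coeffP: "coeff (P M) k = of_nat (count M (int k - int N))"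
    if "\<forall>e\<in>#M. e + int N \<ge> 0" for M k
    using that
  proof (induction M)
    case empty
    then show ?case by (simp add: P_def)
  next
    case (add a M)
    have "P (add_mset a M) = monom 1 (nat (a + int N)) + P M" by (simp add: P_def)
    moreover have "(nat (a + int N) = k) \<longleftrightarrow> (int k - int N = a)" using add.prems by auto
    ultimately show ?case using add by (auto simp: coeff_monom)
  qed
  have EN: "\<forall>e\<in>#E. e + int N \<ge> 0" and FN: "\<forall>e\<in>#F. e + int N \<ge> 0" using Nle by auto
  have roots: "poly (P E - P F) (of_real x) = 0" if "x > 1" for x
  proof -
    have "(of_real x :: complex) \<noteq> 0" using that by simp
    then show ?thesis using polyP[OF EN] polyP[OF FN] H that by simp
  qed
  have "P E - P F = 0"
  proof (rule ccontr)
    assume "P E - P F \<noteq> 0"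
    then have fin: "finite {x. poly (P E - P F) x = 0}" by (rule poly_roots_finite)
    have "of_real ` {1<..} \<subseteq> {x. poly (P E - P F) x = 0}" using roots by auto
    then have "finite ((of_real :: real \<Rightarrow> complex) ` {1<..})" using fin finite_subset by blast
    then have "finite {(1::real)<..}" using finite_imageD inj_of_real inj_on_subset by blast
    then show False using infinite_Ioi by blast
  qed
  then have PEF: "P E = P F" by simp
  show "E = F"
  proof (rule multiset_eqI)
    fix e
    show "count E e = count F e"
    proof (cases "e + int N \<ge> 0")
      case True
      have "of_nat (count E e) = (of_nat (count F e) :: complex)"
        using coeffP[OF EN, of "nat (e + int N)"] coeffP[OF FN, of "nat (e + int N)"] PEF True by simp
      then show ?thesis using of_nat_eq_iff by blast
    next
      case False
      then have "e \<notin># E" "e \<notin># F" using EN FN by auto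
      then show ?thesis by (simp add: not_in_iff)
    qed
  qed
qed

lemma cis_eq_1_int:
  assumes "cis t = 1"
  shows "\<exists>N::int. t = of_int N * 2 * pi"
proof -
  have "Re (cis t) = 1" using assms by simp
  then have "cos t = 1" by simp
  then show ?thesis using cos_one_2pi_int by blast
qed

lemma cis_powi_1:
  fixes m e :: int
  assumes m: "m \<noteq> 0" and h: "cis (pi / of_int m) powi e = 1"
  shows "\<exists>N::int. e = 2 * N * m"
proof -
  have "cis (of_int e * (pi / of_int m)) = 1" using h by (simp add: cis_power_int)
  then obtain N :: int where N: "of_int e * (pi / of_int m) = of_int N * 2 * pi"
    using cis_eq_1_int by blast
  have "of_int e = of_int N * 2 * (of_int m :: real)"
  proof -
    have "of_int e * pi = of_int N * 2 * pi * of_int m" using N m by (simp add: field_simps)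
    then show ?thesis by (simp add: mult.commute mult.left_commute)
  qed
  then have "(of_int e :: real) = of_int (N * 2 * m)" by simp
  then have "e = N * 2 * m" using of_int_eq_iff by blast
  then show ?thesis by (intro exI[of _ N]) simp
qed

lemma W_arg:
  assumes H: "\<forall>z r. dm n u v z \<longrightarrow> Rr n u z r + Rr n v z r = r ^ qu + r ^ qv"
    and qne: "qu \<noteq> qv" and j0: "j0 \<in> {1..n}"
    and mx: "\<forall>j\<in>{1..n}. \<bar>u j\<bar> \<le> \<bar>u j0\<bar> \<and> \<bar>v j\<bar> \<le> \<bar>u j0\<bar>"
    and nz: "\<forall>j\<in>{1..n}. u j \<noteq> 0 \<and> v j \<noteq> 0"
    and disj: "\<forall>j1\<in>{1..n}. \<forall>j2\<in>{1..n}. u j1 \<noteq> v j2"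
  shows "(qu = qv + 1 \<or> qv = qu + 1) \<and> (\<exists>j\<in>{1..n}. v j = - u j0)"
proof -
  define w0 where "w0 = u j0"
  have w0nz: "w0 \<noteq> 0" using nz j0 by (simp add: w0_def)
  define k :: int where "k = int qu - int qv"
  have knz: "k \<noteq> 0" using qne by (simp add: k_def)
  define m where "m = w0 * k"
  have mnz: "m \<noteq> 0" using w0nz knz by (simp add: m_def)
  have absm: "\<bar>m\<bar> \<ge> \<bar>w0\<bar>"
  proof -
    have "\<bar>k\<bar> \<ge> 1" using knz by linarith
    then have "\<bar>w0\<bar> * 1 \<le> \<bar>w0\<bar> * \<bar>k\<bar>" by (intro mult_left_mono) auto
    then show ?thesis by (simp add: m_def abs_mult)
  qed
  define \<zeta> where "\<zeta> = cis (pi / of_int m)"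
  have zpow1: "\<exists>N::int. e = 2 * N * m" if "\<zeta> powi e = 1" for e
    using cis_powi_1[OF mnz] that by (simp add: \<zeta>_def)
  have ne1: "\<zeta> powi e \<noteq> 1" if "e \<noteq> 0" "\<bar>e\<bar> \<le> \<bar>w0\<bar>" for e
  proof
    assume "\<zeta> powi e = 1"
    then obtain N where N: "e = 2 * N * m" using zpow1 by blast
    then have "N \<noteq> 0" using that(1) by auto
    then have "\<bar>N\<bar> \<ge> 1" by linarith
    have "\<bar>e\<bar> = 2 * \<bar>N\<bar> * \<bar>m\<bar>" using N by (simp add: abs_mult)
    also have "\<dots> \<ge> 2 * 1 * \<bar>m\<bar>" using \<open>\<bar>N\<bar> \<ge> 1\<close> by (intro mult_right_mono) auto
    finally have "\<bar>e\<bar> \<ge> 2 * \<bar>m\<bar>" by simp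
    then show False using that absm w0nz by linarith
  qed
  have dz: "dm n u v \<zeta>"
    unfolding dm_def
  proof (intro conjI ballI)
    show "\<zeta> \<noteq> 0" by (simp add: \<zeta>_def)
  next
    fix j assume "j \<in> {1..n}"
    then show "\<zeta> powi u j \<noteq> 1" using nz mx by (intro ne1) (auto simp: w0_def)
  next
    fix j assume "j \<in> {1..n}"
    then show "\<zeta> powi v j \<noteq> 1" using nz mx by (intro ne1) (auto simp: w0_def)
  qed
  define r where "r = \<zeta> powi w0"
  have Ru: "Rr n u \<zeta> r = 0"
    unfolding Rr_def using j0 by (intro prod_zero) (auto simp: r_def w0_def intro!: bexI[of _ j0])
  have rq: "r ^ qu + r ^ qv = 0"
  proof -
    have r: "r = cis (of_int w0 * (pi / of_int m))" by (simp add: r_def \<zeta>_def cis_power_int)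
    have "real qu * (of_int w0 * (pi / of_int m)) = real qv * (of_int w0 * (pi / of_int m)) + pi"
    proof -
      define T where "T = of_int w0 * (pi / of_int m)"
      have qeq: "real qu = real qv + of_int k" by (simp add: k_def)
      have X: "of_int k * T = pi"
        using mnz by (simp add: T_def m_def field_simps)
      have "real qu * T = (real qv + of_int k) * T" using qeq by simp
      also have "\<dots> = real qv * T + of_int k * T" by (simp add: distrib_right)
      also have "\<dots> = real qv * T + pi" using X by simp
      finally show ?thesis by (simp add: T_def)
    qed
    then have "r ^ qu = cis (real qv * (of_int w0 * (pi / of_int m)) + pi)"
      by (simp only: r Complex.DeMoivre)
    also have "\<dots> = cis (real qv * (of_int w0 * (pi / of_int m))) * cis pi"
      by (simp only: cis_mult)
    also have "\<dots> = - (r ^ qv)" by (simp only: r Complex.DeMoivre cis_pi) simp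
    finally show ?thesis by simp
  qed
  have "Rr n u \<zeta> r + Rr n v \<zeta> r = r ^ qu + r ^ qv" using H dz by blast
  then have "Rr n v \<zeta> r = 0" using Ru rq by simp
  then obtain j where j: "j \<in> {1..n}" and fz: "(\<zeta> powi v j - r) / (\<zeta> powi v j - 1) = 0"
    unfolding Rr_def by (auto simp: prod_zero_iff)
  have "\<zeta> powi v j \<noteq> 1" using dz j by (simp add: dm_def)
  then have "\<zeta> powi v j = r" using fz by simp
  then have "\<zeta> powi (v j - w0) = 1"
    by (simp add: r_def power_int_diff \<zeta>_def)
  then obtain N where N: "v j - w0 = 2 * N * m" using zpow1 by blast
  have "u j0 \<noteq> v j" using disj j j0 by blast
  then have "v j \<noteq> w0" by (auto simp: w0_def)
  then have "N \<noteq> 0" using N by auto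
  then have N1: "\<bar>N\<bar> \<ge> 1" by linarith
  have k1: "\<bar>k\<bar> \<ge> 1" using knz by linarith
  have eqa: "\<bar>v j - w0\<bar> = 2 * \<bar>w0\<bar> * (\<bar>N\<bar> * \<bar>k\<bar>)" using N by (simp add: abs_mult m_def)
  have "\<bar>v j\<bar> \<le> \<bar>w0\<bar>" using mx j by (simp add: w0_def)
  then have le: "\<bar>v j - w0\<bar> \<le> 2 * \<bar>w0\<bar>" by linarith
  have "\<bar>N\<bar> * \<bar>k\<bar> \<le> 1"
  proof (rule ccontr)
    assume "\<not> \<bar>N\<bar> * \<bar>k\<bar> \<le> 1"
    then have "\<bar>N\<bar> * \<bar>k\<bar> \<ge> 2" by linarith
    then have "2 * \<bar>w0\<bar> * (\<bar>N\<bar> * \<bar>k\<bar>) \<ge> 2 * \<bar>w0\<bar> * 2" by (intro mult_left_mono) auto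
    then show False using eqa le w0nz by linarith
  qed
  moreover have "\<bar>k\<bar> \<le> \<bar>N\<bar> * \<bar>k\<bar>" using N1 by (simp add: mult_le_cancel_right1)
  moreover have "\<bar>N\<bar> \<le> \<bar>N\<bar> * \<bar>k\<bar>" using k1 by (simp add: mult_le_cancel_left1)
  ultimately have kk: "\<bar>k\<bar> = 1" and NN: "\<bar>N\<bar> = 1" using N1 k1 by linarith+
  have "\<bar>v j - w0\<bar> = 2 * \<bar>w0\<bar>" using eqa kk NN by simp
  moreover have "\<bar>v j\<bar> \<le> \<bar>w0\<bar>" using mx j by (simp add: w0_def)
  ultimately have "v j = - w0" by linarith
  moreover have "qu = qv + 1 \<or> qv = qu + 1" using kk by (simp add: k_def) linarith
  ultimately show ?thesis using j by (auto simp: w0_def)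
qed

lemma alg1:
  fixes E c d1 d2 :: complex
  assumes "E \<noteq> 0" "c \<noteq> 0" "d1 \<noteq> 0" "d2 \<noteq> 0" "E / d1 * c + E / d2 * c = 0"
  shows "d2 = - d1"
proof -
  have "E * c * (d1 + d2) / (d1 * d2) = 0" using assms(3-5) by (simp add: field_simps)
  then have "d1 + d2 = 0" using assms(1-4) by simp
  then show ?thesis by (simp add: eq_neg_iff_add_eq_0 add.commute)
qed
lemma alg2:
  fixes E c d1 d2 S1 S2 K :: complex
  assumes "E \<noteq> 0" "d1 \<noteq> 0" "d2 = - d1" "E / d1 * (c * S1) + E / d2 * (c * S2) = K"
  shows "c * (S1 - S2) = K * d1 / E"
proof -
  have "E * (c * (S1 - S2)) / d1 = K" using assms(2-4) by (simp add: field_simps)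
  then show ?thesis using assms(1,2) by (simp add: field_simps)
qed
lemma alg3:
  fixes E c d1 d2 :: complex
  assumes "E \<noteq> 0" "c \<noteq> 0" "d1 \<noteq> 0" "d2 \<noteq> 0" "E / d1 * c + (- E) / d2 * c = 0"
  shows "d2 = d1"
proof -
  have "E * c * (d2 - d1) / (d1 * d2) = 0" using assms(3-5) by (simp add: field_simps)
  then have "d2 - d1 = 0" using assms(1-4) by simp
  then show ?thesis by simp
qed
lemma alg4:
  fixes E c d1 S1 S2 :: complex
  assumes "E \<noteq> 0" "c \<noteq> 0" "d1 \<noteq> 0" "E / d1 * (c * S1) + (- E) / d1 * (c * S2) = 0"
  shows "S1 = S2"
proof -
  have "E * c * (S1 - S2) / d1 = 0" using assms(3-4) by (simp add: field_simps)
  then show ?thesis using assms(1-3) by simp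
qed

lemma sum_mset_conv: "(\<Sum>j\<in>J. z powi u j) = (\<Sum>e\<in>#image_mset u (mset_set J). z powi e)"
  by (simp add: sum_unfold_sum_mset multiset.map_comp comp_def)

lemma S_eq_mset:
  assumes nz: "\<forall>j\<in>{1..n}. u j \<noteq> 0 \<and> v j \<noteq> 0"
    and H: "\<forall>z. dm n u v z \<longrightarrow> (\<Sum>j\<in>{1..n}. z powi u j) = (\<Sum>j\<in>{1..n}. z powi v j)"
  shows "image_mset u (mset_set {1..n}) = image_mset v (mset_set {1..n})"
proof (rule mset_exps_eq, intro allI impI)
  fix x :: real assume "x > 1"
  then have "dm n u v (of_real x)" using dm_real nz by blast
  then show "(\<Sum>e\<in>#image_mset u (mset_set {1..n}). (of_real x :: complex) powi e)
           = (\<Sum>e\<in>#image_mset v (mset_set {1..n}). (of_real x :: complex) powi e)"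
    using H by (simp flip: sum_mset_conv)
qed

lemma D_nz:
  assumes "dm n u v z"
  shows "(\<Prod>j\<in>{1..n}. z powi u j - 1) \<noteq> 0" "(\<Prod>j\<in>{1..n}. z powi v j - 1) \<noteq> 0"
  using assms unfolding dm_def by (auto simp: prod_zero_iff)

lemma dm_sym: "dm n u v z \<longleftrightarrow> dm n v u z"
  unfolding dm_def by auto

lemma star:
  assumes nz: "\<forall>i\<in>{1,2}. \<forall>j\<in>{1..n}. w i j \<noteq> 0" and hyp: "\<forall>x y. T_const n w eps x y"
  shows "\<forall>z r. dm n (w 1) (w 2) z \<longrightarrow>
     of_int (eps 1) * Rr n (w 1) z r + of_int (eps 2) * Rr n (w 2) z r
       = of_int (eps 1) * r ^ qc n (w 1) + of_int (eps 2) * r ^ qc n (w 2)"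
proof (intro allI impI)
  fix z r assume dz: "dm n (w 1) (w 2) z"
  have "T_const n w eps 1 (-r)" using hyp by blast
  from c_formula_gen[OF nz this] dz show "of_int (eps 1) * Rr n (w 1) z r + of_int (eps 2) * Rr n (w 2) z r
       = of_int (eps 1) * r ^ qc n (w 1) + of_int (eps 2) * r ^ qc n (w 2)" by auto
qed

lemma opp_case:
  assumes n1: "n \<ge> 1" and nz: "\<forall>i\<in>{1,2}. \<forall>j\<in>{1..n}. w i j \<noteq> 0"
    and e: "\<forall>i\<in>{1,2}. eps i \<in> {1, -1}" and hyp: "\<forall>x y. T_const n w eps x y"
    and e2: "eps 2 = - eps 1"
  shows "case_Z n w eps"
proof -
  let ?q1 = "qc n (w 1)" and ?q2 = "qc n (w 2)"
  have qq: "?q1 = ?q2" using q_rel[OF nz hyp e] e2 by blast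
  define E :: complex where "E = of_int (eps 1)"
  have Enz: "E \<noteq> 0" using e by (auto simp: E_def)
  have st: "\<forall>z r. dm n (w 1) (w 2) z \<longrightarrow> E * Rr n (w 1) z r + (- E) * Rr n (w 2) z r = E * r ^ ?q1 + (- E) * r ^ ?q1"
    using star[OF nz hyp] unfolding e2 qq E_def by simp
  have key: "\<forall>z. dm n (w 1) (w 2) z \<longrightarrow> (\<Sum>j\<in>{1..n}. z powi w 1 j) = (\<Sum>j\<in>{1..n}. z powi w 2 j)"
  proof (intro allI impI)
    fix z assume dz: "dm n (w 1) (w 2) z"
    have H: "\<forall>r. E * Rr n (w 1) z r + (- E) * Rr n (w 2) z r = E * r ^ ?q1 + (- E) * r ^ ?q1"
      using st dz by blast
    note CI = coeff_ident[OF n1 dz H]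
    have d1: "(\<Prod>j\<in>{1..n}. z powi w 1 j - 1) \<noteq> 0" and d2: "(\<Prod>j\<in>{1..n}. z powi w 2 j - 1) \<noteq> 0"
      using D_nz[OF dz] by auto
    have c1: "E / (\<Prod>j\<in>{1..n}. z powi w 1 j - 1) * (-1) ^ n + (- E) / (\<Prod>j\<in>{1..n}. z powi w 2 j - 1) * (-1) ^ n = 0"
      using CI(1) by simp
    have DD: "(\<Prod>j\<in>{1..n}. z powi w 2 j - 1) = (\<Prod>j\<in>{1..n}. z powi w 1 j - 1)"
      by (rule alg3[OF Enz _ d1 d2 c1]) simp
    have c2: "E / (\<Prod>j\<in>{1..n}. z powi w 1 j - 1) * ((-1) ^ (n - 1) * (\<Sum>j\<in>{1..n}. z powi w 1 j))
       + (- E) / (\<Prod>j\<in>{1..n}. z powi w 1 j - 1) * ((-1) ^ (n - 1) * (\<Sum>j\<in>{1..n}. z powi w 2 j)) = 0"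
      using CI(2) DD by simp
    show "(\<Sum>j\<in>{1..n}. z powi w 1 j) = (\<Sum>j\<in>{1..n}. z powi w 2 j)"
      by (rule alg4[OF Enz _ d1 c2]) simp
  qed
  have nz12: "\<forall>j\<in>{1..n}. w 1 j \<noteq> 0 \<and> w 2 j \<noteq> 0" using nz by auto
  have ms: "image_mset (w 1) (mset_set {1..n}) = image_mset (w 2) (mset_set {1..n})"
    by (rule S_eq_mset[OF nz12 key])
  obtain p where p: "p permutes {1..n}" and pw: "\<forall>x\<in>{1..n}. w 1 x = w 2 (p x)"
    using image_mset_eq_implies_permutes[OF _ ms] by blast
  define \<sigma> :: "nat \<Rightarrow> nat \<Rightarrow> nat" where "\<sigma> = (\<lambda>i. if i = 1 then id else p)"
  define w' where "w' = (\<lambda>i j. w (id i) (\<sigma> (id i) j))"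
  define eps' where "eps' = (\<lambda>i. eps (id i))"
  have R: "rearr n w eps w' eps'"
    unfolding rearr_def
    apply (rule exI[of _ id], rule exI[of _ \<sigma>])
    using p by (auto simp: permutes_id \<sigma>_def w'_def eps'_def)
  moreover have "\<forall>j\<in>{1..n}. w' 1 j = w' 2 j" using pw by (simp add: w'_def \<sigma>_def)
  moreover have "eps' 1 = - eps' 2" using e2 by (simp add: eps'_def)
  ultimately show ?thesis unfolding case_Z_def by blast
qed

lemma sign3:
  fixes f :: "nat \<Rightarrow> int"
  assumes s: "f 1 + f 2 + f 3 = 0" and nz: "f 1 \<noteq> 0" "f 2 \<noteq> 0" "f 3 \<noteq> 0"
  shows "\<exists>\<sigma>. \<sigma> permutes {1..3} \<and> ((f (\<sigma> 1) > 0 \<and> f (\<sigma> 2) > 0) \<or> (f (\<sigma> 1) < 0 \<and> f (\<sigma> 2) < 0))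
           \<and> f (\<sigma> 3) = - (f (\<sigma> 1) + f (\<sigma> 2))"
proof -
  have p1: "id permutes {1..3::nat}" by (rule permutes_id)
  have p2: "Transposition.transpose 2 3 permutes {1..3::nat}" by (rule permutes_swap_id) auto
  have p3: "Transposition.transpose 1 3 permutes {1..3::nat}" by (rule permutes_swap_id) auto
  show ?thesis
  proof (cases "(f 1 > 0) = (f 2 > 0)")
    case True
    then show ?thesis using p1 s nz by (intro exI[of _ id]) auto
  next
    case F1: False
    show ?thesis
    proof (cases "(f 1 > 0) = (f 3 > 0)")
      case True
      then show ?thesis using p2 s nz by (intro exI[of _ "Transposition.transpose 2 3"]) (auto simp: Transposition.transpose_def)
    next
      case False
      with F1 have "(f 2 > 0) = (f 3 > 0)" by auto
      then show ?thesis using p3 s nz by (intro exI[of _ "Transposition.transpose 1 3"]) (auto simp: Transposition.transpose_def)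
    qed
  qed
qed

lemma L1_build:
  assumes n: "n = 1" and opp: "w 2 1 = - w 1 1" and nz: "w 1 1 \<noteq> 0" and e2: "eps 2 = eps 1"
  shows "case_L1 n w eps"
proof (cases "w 1 1 > 0")
  case True
  define w' where "w' = (\<lambda>i j. w (id i) ((\<lambda>i. id) (id i) j))"
  define eps' where "eps' = (\<lambda>i. eps (id i))"
  have "rearr n w eps w' eps'"
    unfolding rearr_def
    by (rule exI[of _ id], rule exI[of _ "\<lambda>i. id"]) (auto simp: permutes_id w'_def eps'_def)
  moreover have "\<exists>a::int. a > 0 \<and> w' 1 1 = a \<and> w' 2 1 = - a"
    using True opp by (auto simp: w'_def)
  moreover have "eps' 1 = eps' 2" using e2 by (simp add: eps'_def)
  ultimately show ?thesis unfolding case_L1_def using n by blast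
next
  case False
  define \<tau> :: "nat \<Rightarrow> nat" where "\<tau> = Transposition.transpose 1 2"
  have t1: "\<tau> 1 = 2" "\<tau> (Suc 0) = 2" and t2: "\<tau> 2 = 1" by (simp_all add: \<tau>_def)
  have tp: "\<tau> permutes {1,2}" unfolding \<tau>_def by (rule permutes_swap_id) auto
  define w' where "w' = (\<lambda>i j. w (\<tau> i) ((\<lambda>i. id) (\<tau> i) j))"
  define eps' where "eps' = (\<lambda>i. eps (\<tau> i))"
  have "rearr n w eps w' eps'"
    unfolding rearr_def
    apply (rule exI[of _ \<tau>], rule exI[of _ "\<lambda>i. id"])
    using tp by (auto simp: permutes_id w'_def eps'_def)
  moreover have "\<exists>a::int. a > 0 \<and> w' 1 1 = a \<and> w' 2 1 = - a"
    using False opp nz by (intro exI[of _ "w 2 1"]) (auto simp: w'_def t1 t2)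
  moreover have "eps' 1 = eps' 2" using e2 by (simp add: eps'_def t1 t2)
  ultimately show ?thesis unfolding case_L1_def using n by blast
qed

lemma S3_build:
  assumes n: "n = 3" and p: "p permutes {1..3}" and pw: "\<forall>x\<in>{1..3}. - w 1 x = w 2 (p x)"
    and nz: "w 1 1 \<noteq> 0" "w 1 2 \<noteq> 0" "w 1 3 \<noteq> 0" and s0: "w 1 1 + w 1 2 + w 1 3 = 0"
    and e2: "eps 2 = eps 1"
  shows "case_S3 n w eps"
proof -
  obtain \<sigma> where sp: "\<sigma> permutes {1..3}"
    and sg: "(w 1 (\<sigma> 1) > 0 \<and> w 1 (\<sigma> 2) > 0) \<or> (w 1 (\<sigma> 1) < 0 \<and> w 1 (\<sigma> 2) < 0)"
    and s3: "w 1 (\<sigma> 3) = - (w 1 (\<sigma> 1) + w 1 (\<sigma> 2))"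
    using sign3[of "w 1"] s0 nz by blast
  have psp: "p \<circ> \<sigma> permutes {1..3}" by (rule permutes_compose[OF sp p])
  have sin: "\<sigma> j \<in> {1..3}" if "j \<in> {1..3}" for j using permutes_in_image[OF sp] that by blast
  have neg: "w 2 (p (\<sigma> j)) = - w 1 (\<sigma> j)" if "j \<in> {1..3}" for j using pw sin[OF that] by auto
  have neg1: "w 2 (p (\<sigma> 1)) = - w 1 (\<sigma> 1)" "w 2 (p (\<sigma> 2)) = - w 1 (\<sigma> 2)"
    "w 2 (p (\<sigma> 3)) = - w 1 (\<sigma> 3)" using neg by auto
  define \<sigma>' :: "nat \<Rightarrow> nat \<Rightarrow> nat" where "\<sigma>' = (\<lambda>i. if i = 1 then \<sigma> else p \<circ> \<sigma>)"
  have sp': "\<forall>i\<in>{1,2}. \<sigma>' i permutes {1..n}" using sp psp n by (auto simp: \<sigma>'_def)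
  from sg show ?thesis
  proof
    assume pos: "w 1 (\<sigma> 1) > 0 \<and> w 1 (\<sigma> 2) > 0"
    define w' where "w' = (\<lambda>i j. w (id i) (\<sigma>' (id i) j))"
    define eps' where "eps' = (\<lambda>i. eps (id i))"
    have "rearr n w eps w' eps'"
      unfolding rearr_def
      by (rule exI[of _ id], rule exI[of _ \<sigma>']) (use sp' in \<open>auto simp: permutes_id w'_def eps'_def\<close>)
    moreover have "\<exists>a b::int. a > 0 \<and> b > 0 \<and>
        w' 1 1 = a \<and> w' 1 2 = b \<and> w' 1 3 = - (a + b) \<and>
        w' 2 1 = - a \<and> w' 2 2 = - b \<and> w' 2 3 = a + b"
      apply (rule exI[of _ "w 1 (\<sigma> 1)"], rule exI[of _ "w 1 (\<sigma> 2)"])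
      using pos s3 neg1 by (auto simp: w'_def \<sigma>'_def)
    moreover have "eps' 1 = eps' 2" using e2 by (simp add: eps'_def)
    ultimately show ?thesis unfolding case_S3_def using n by blast
  next
    assume ng: "w 1 (\<sigma> 1) < 0 \<and> w 1 (\<sigma> 2) < 0"
    define \<tau> :: "nat \<Rightarrow> nat" where "\<tau> = Transposition.transpose 1 2"
    have t1: "\<tau> 1 = 2" "\<tau> (Suc 0) = 2" and t2: "\<tau> 2 = 1" by (simp_all add: \<tau>_def)
    have tp: "\<tau> permutes {1,2}" unfolding \<tau>_def by (rule permutes_swap_id) auto
    define w' where "w' = (\<lambda>i j. w (\<tau> i) (\<sigma>' (\<tau> i) j))"
    define eps' where "eps' = (\<lambda>i. eps (\<tau> i))"
    have "rearr n w eps w' eps'"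
      unfolding rearr_def
      by (rule exI[of _ \<tau>], rule exI[of _ \<sigma>']) (use sp' tp in \<open>auto simp: w'_def eps'_def\<close>)
    moreover have "\<exists>a b::int. a > 0 \<and> b > 0 \<and>
        w' 1 1 = a \<and> w' 1 2 = b \<and> w' 1 3 = - (a + b) \<and>
        w' 2 1 = - a \<and> w' 2 2 = - b \<and> w' 2 3 = a + b"
      apply (rule exI[of _ "- w 1 (\<sigma> 1)"], rule exI[of _ "- w 1 (\<sigma> 2)"])
      using ng s3 neg1 by (auto simp: w'_def \<sigma>'_def t1 t2)
    moreover have "eps' 1 = eps' 2" using e2 by (simp add: eps'_def t1 t2)
    ultimately show ?thesis unfolding case_S3_def using n by blast
  qed
qed

lemma alg_n2: fixes X1 X2 Y1 Y2 :: complex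
  shows "- (X1 + X2 - (Y1 + Y2)) = 2 * ((X1 - 1) * (X2 - 1)) \<Longrightarrow> X1 + X2 + Y1 + Y2 = X1*X2 + X1*X2 + 1 + 1"
  by algebra

lemma alg_n3: fixes X1 X2 X3 Y1 Y2 Y3 :: complex
  shows "X1 + X2 + X3 - (Y1 + Y2 + Y3) = (X1-1)*(X2-1)*(X3-1) \<Longrightarrow> 1 + X1*X2 + X1*X3 + X2*X3 = X1*X2*X3 + Y1 + Y2 + Y3"
  by algebra

lemma n2_contra:
  fixes w :: "nat \<Rightarrow> nat \<Rightarrow> int"
  assumes n: "n = 2" and nz12: "\<forall>j\<in>{1..n}. w 1 j \<noteq> 0 \<and> w 2 j \<noteq> 0"
    and H: "\<forall>z. dm n (w 1) (w 2) z \<longrightarrow> - ((\<Sum>j\<in>{1..n}. z powi w 1 j) - (\<Sum>j\<in>{1..n}. z powi w 2 j)) = 2 * (\<Prod>j\<in>{1..n}. z powi w 1 j - 1)"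
  shows False
proof -
  have I: "{1..n} = {1,2::nat}" using n by auto
  have "{#w 1 1, w 1 2, w 2 1, w 2 2#} = {#w 1 1 + w 1 2, w 1 1 + w 1 2, 0, 0#}"
  proof (rule mset_exps_eq, intro allI impI)
    fix x :: real assume x: "x > 1"
    define z :: complex where "z = of_real x"
    have dz: "dm n (w 1) (w 2) z" unfolding z_def using dm_real[OF x nz12] .
    have z0: "z \<noteq> 0" using dz by (simp add: dm_def)
    have "- (z powi w 1 1 + z powi w 1 2 - (z powi w 2 1 + z powi w 2 2)) = 2 * ((z powi w 1 1 - 1) * (z powi w 1 2 - 1))"
      using H dz unfolding I by simp
    from alg_n2[OF this] z0
    show "(\<Sum>e\<in>#{#w 1 1, w 1 2, w 2 1, w 2 2#}. (of_real x :: complex) powi e) = (\<Sum>e\<in>#{#w 1 1 + w 1 2, w 1 1 + w 1 2, 0, 0#}. of_real x powi e)"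
      by (simp add: z_def power_int_add algebra_simps)
  qed
  then have "0 \<in># {#w 1 1, w 1 2, w 2 1, w 2 2#}" by simp
  then show False using nz12 n by auto
qed

lemma n3_mset:
  fixes w :: "nat \<Rightarrow> nat \<Rightarrow> int"
  assumes n: "n = 3" and nz12: "\<forall>j\<in>{1..n}. w 1 j \<noteq> 0 \<and> w 2 j \<noteq> 0"
    and H: "\<forall>z. dm n (w 1) (w 2) z \<longrightarrow> (\<Sum>j\<in>{1..n}. z powi w 1 j) - (\<Sum>j\<in>{1..n}. z powi w 2 j) = (\<Prod>j\<in>{1..n}. z powi w 1 j - 1)"
  shows "image_mset (\<lambda>j. - w 1 j) (mset_set {1..3}) = image_mset (w 2) (mset_set {1..3}) \<and> w 1 1 + w 1 2 + w 1 3 = 0"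
proof -
  have I: "{1..n} = {1,2,3::nat}" using n by auto
  have ms: "{#0, w 1 1 + w 1 2, w 1 1 + w 1 3, w 1 2 + w 1 3#} = {#w 1 1 + w 1 2 + w 1 3, w 2 1, w 2 2, w 2 3#}"
  proof (rule mset_exps_eq, intro allI impI)
    fix x :: real assume x: "x > 1"
    define z :: complex where "z = of_real x"
    have dz: "dm n (w 1) (w 2) z" unfolding z_def using dm_real[OF x nz12] .
    have z0: "z \<noteq> 0" using dz by (simp add: dm_def)
    have "z powi w 1 1 + z powi w 1 2 + z powi w 1 3 - (z powi w 2 1 + z powi w 2 2 + z powi w 2 3)
        = (z powi w 1 1 - 1) * (z powi w 1 2 - 1) * (z powi w 1 3 - 1)"
      using H dz unfolding I by (simp add: algebra_simps)
    from alg_n3[OF this] z0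
    show "(\<Sum>e\<in>#{#0, w 1 1 + w 1 2, w 1 1 + w 1 3, w 1 2 + w 1 3#}. (of_real x :: complex) powi e)
        = (\<Sum>e\<in>#{#w 1 1 + w 1 2 + w 1 3, w 2 1, w 2 2, w 2 3#}. of_real x powi e)"
      by (simp add: z_def power_int_add algebra_simps)
  qed
  have "0 \<in># {#w 1 1 + w 1 2 + w 1 3, w 2 1, w 2 2, w 2 3#}" using ms[symmetric] by simp
  then have s0: "w 1 1 + w 1 2 + w 1 3 = 0" using nz12 n by auto
  have "add_mset 0 {#w 1 1 + w 1 2, w 1 1 + w 1 3, w 1 2 + w 1 3#} = add_mset 0 {#w 2 1, w 2 2, w 2 3#}"
    using ms s0 by simp
  then have "{#w 1 1 + w 1 2, w 1 1 + w 1 3, w 1 2 + w 1 3#} = {#w 2 1, w 2 2, w 2 3#}" by simp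
  moreover have r: "w 1 1 + w 1 2 = - w 1 3" "w 1 1 + w 1 3 = - w 1 2" "w 1 2 + w 1 3 = - w 1 1" using s0 by linarith+
  ultimately have "{#- w 1 3, - w 1 2, - w 1 1#} = {#w 2 1, w 2 2, w 2 3#}" by (simp only: r)
  then have "{#- w 1 1, - w 1 2, - w 1 3#} = {#w 2 1, w 2 2, w 2 3#}" by (simp add: add_mset_commute)
  moreover have "mset_set {1..3::nat} = {#1,2,3#}" by (simp add: numeral_3_eq_3 atLeastAtMostSuc_conv)
  ultimately show ?thesis using s0 by simp
qed

lemma eq_case:
  fixes n :: nat and w :: "nat \<Rightarrow> nat \<Rightarrow> int" and eps :: "nat \<Rightarrow> int"
  assumes n1: "n \<ge> 1" and nz: "\<forall>i\<in>{1,2}. \<forall>j\<in>{1..n}. w i j \<noteq> 0"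
    and e: "\<forall>i\<in>{1,2}. eps i \<in> {1, -1}" and hyp: "\<forall>x y. T_const n w eps x y"
    and e2: "eps 2 = eps 1"
  shows "case_L1 n w eps \<or> case_S3 n w eps"
proof -
  let ?q1 = "qc n (w 1)" and ?q2 = "qc n (w 2)"
  have qs: "?q1 + ?q2 = n" using q_rel[OF nz hyp e] e2 by blast
  define E :: complex where "E = of_int (eps 1)"
  have Enz: "E \<noteq> 0" using e by (auto simp: E_def)
  have st: "\<forall>z r. dm n (w 1) (w 2) z \<longrightarrow> E * Rr n (w 1) z r + E * Rr n (w 2) z r = E * r ^ ?q1 + E * r ^ ?q2"
    using star[OF nz hyp] unfolding e2 E_def by simp
  have st': "\<forall>z r. dm n (w 1) (w 2) z \<longrightarrow> Rr n (w 1) z r + Rr n (w 2) z r = r ^ ?q1 + r ^ ?q2"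
  proof (intro allI impI)
    fix z r assume "dm n (w 1) (w 2) z"
    then have "E * (Rr n (w 1) z r + Rr n (w 2) z r) = E * (r ^ ?q1 + r ^ ?q2)"
      using st by (simp add: distrib_left)
    then show "Rr n (w 1) z r + Rr n (w 2) z r = r ^ ?q1 + r ^ ?q2" using Enz by simp
  qed
  have nz12: "\<forall>j\<in>{1..n}. w 1 j \<noteq> 0 \<and> w 2 j \<noteq> 0" using nz by auto
  have disj: "\<forall>j1\<in>{1..n}. \<forall>j2\<in>{1..n}. w 1 j1 \<noteq> w 2 j2"
  proof (intro ballI notI)
    fix j1 j2 assume j1: "j1 \<in> {1..n}" and j2: "j2 \<in> {1..n}" and eq: "w 1 j1 = w 2 j2"
    define z :: complex where "z = of_real 2"
    have dz: "dm n (w 1) (w 2) z" unfolding z_def by (rule dm_real[OF _ nz12]) simp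
    define t :: real where "t = 2 powi w 1 j1"
    have tpos: "t > 0" by (simp add: t_def)
    define r where "r = z powi w 1 j1"
    have rt: "r = of_real t" by (simp add: r_def z_def t_def of_real_power_int)
    have R1: "Rr n (w 1) z r = 0"
      unfolding Rr_def using j1 by (intro prod_zero) (auto simp: r_def intro!: bexI[of _ j1])
    have R2: "Rr n (w 2) z r = 0"
      unfolding Rr_def using j2 eq by (intro prod_zero) (auto simp: r_def intro!: bexI[of _ j2])
    have "Rr n (w 1) z r + Rr n (w 2) z r = r ^ ?q1 + r ^ ?q2" using st' dz by blast
    then have "r ^ ?q1 + r ^ ?q2 = 0" using R1 R2 by simp
    then have "of_real (t ^ ?q1 + t ^ ?q2) = (0::complex)" by (simp add: rt)
    then have "t ^ ?q1 + t ^ ?q2 = 0" by (simp only: of_real_eq_0_iff)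
    moreover have "t ^ ?q1 + t ^ ?q2 > 0" using tpos by (simp add: add_pos_pos)
    ultimately show False by simp
  qed
  have ms_contra: "image_mset (w 1) (mset_set {1..n}) \<noteq> image_mset (w 2) (mset_set {1..n})"
  proof
    assume ms: "image_mset (w 1) (mset_set {1..n}) = image_mset (w 2) (mset_set {1..n})"
    have A: "w 1 1 \<in># image_mset (w 1) (mset_set {1..n})" using n1 by simp
    have "w 1 1 \<in># image_mset (w 2) (mset_set {1..n})" using A unfolding ms .
    then obtain j where j: "j \<in> {1..n}" "w 2 j = w 1 1" by auto
    moreover have "(1::nat) \<in> {1..n}" using n1 by simp
    ultimately show False using disj by metis
  qed
  define D1 where "D1 = (\<lambda>z::complex. \<Prod>j\<in>{1..n}. z powi w 1 j - 1)"
  define D2 where "D2 = (\<lambda>z::complex. \<Prod>j\<in>{1..n}. z powi w 2 j - 1)"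
  define S1 where "S1 = (\<lambda>z::complex. \<Sum>j\<in>{1..n}. z powi w 1 j)"
  define S2 where "S2 = (\<lambda>z::complex. \<Sum>j\<in>{1..n}. z powi w 2 j)"
  have CI: "E / D1 z * (-1) ^ n + E / D2 z * (-1) ^ n = (if ?q1 = n then E else 0) + (if ?q2 = n then E else 0)
        \<and> E / D1 z * ((-1) ^ (n - 1) * S1 z) + E / D2 z * ((-1) ^ (n - 1) * S2 z)
            = (if ?q1 = n - 1 then E else 0) + (if ?q2 = n - 1 then E else 0)"
    if dz: "dm n (w 1) (w 2) z" for z
  proof -
    have H: "\<forall>r. E * Rr n (w 1) z r + E * Rr n (w 2) z r = E * r ^ ?q1 + E * r ^ ?q2" using st dz by blast
    from coeff_ident[OF n1 dz H] show ?thesis unfolding D1_def D2_def S1_def S2_def by simp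
  qed
  have Dnz: "D1 z \<noteq> 0" "D2 z \<noteq> 0" if "dm n (w 1) (w 2) z" for z
    using D_nz[OF that] unfolding D1_def D2_def by auto
  have pm: "((-1::complex) ^ k) \<noteq> 0" for k by simp
  have top2: "\<not> (?q1 \<noteq> n \<and> ?q2 \<noteq> n \<and> ?q1 \<noteq> n - 1 \<and> ?q2 \<noteq> n - 1)"
  proof
    assume qn: "?q1 \<noteq> n \<and> ?q2 \<noteq> n \<and> ?q1 \<noteq> n - 1 \<and> ?q2 \<noteq> n - 1"
    have "\<forall>z. dm n (w 1) (w 2) z \<longrightarrow> S1 z = S2 z"
    proof (intro allI impI)
      fix z assume dz: "dm n (w 1) (w 2) z"
      have c1: "E / D1 z * (-1) ^ n + E / D2 z * (-1) ^ n = 0" using CI[OF dz] qn by simp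
      have c2: "E / D1 z * ((-1) ^ (n - 1) * S1 z) + E / D2 z * ((-1) ^ (n - 1) * S2 z) = 0"
        using CI[OF dz] qn by simp
      have DD: "D2 z = - D1 z" by (rule alg1[OF Enz pm Dnz[OF dz] c1])
      have "(-1) ^ (n - 1) * (S1 z - S2 z) = 0 * D1 z / E" by (rule alg2[OF Enz Dnz(1)[OF dz] DD c2])
      then show "S1 z = S2 z" by simp
    qed
    then have "image_mset (w 1) (mset_set {1..n}) = image_mset (w 2) (mset_set {1..n})"
      by (intro S_eq_mset[OF nz12]) (simp add: S1_def S2_def)
    with ms_contra show False by blast
  qed
  have qne: "?q1 \<noteq> ?q2"
  proof
    assume qq: "?q1 = ?q2"
    have n2: "n = 2" and q1: "?q1 = 1" using top2 qs qq n1 by auto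
    have "\<forall>z. dm n (w 1) (w 2) z \<longrightarrow> - (S1 z - S2 z) = 2 * D1 z"
    proof (intro allI impI)
      fix z assume dz: "dm n (w 1) (w 2) z"
      have i1: "(if ?q1 = n then E else 0) = 0" "(if ?q2 = n then E else 0) = 0"
        "(if ?q1 = n - 1 then E else 0) = E" "(if ?q2 = n - 1 then E else 0) = E"
        using q1 qq n2 by auto
      have c1: "E / D1 z * (-1) ^ n + E / D2 z * (-1) ^ n = 0"
        using CI[OF dz] unfolding i1 by (simp only: add_0)
      have c2: "E / D1 z * ((-1) ^ (n - 1) * S1 z) + E / D2 z * ((-1) ^ (n - 1) * S2 z) = E + E"
        using CI[OF dz] unfolding i1 by blast
      have DD: "D2 z = - D1 z" by (rule alg1[OF Enz pm Dnz[OF dz] c1])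
      have "(-1) ^ (n - 1) * (S1 z - S2 z) = (E + E) * D1 z / E" by (rule alg2[OF Enz Dnz(1)[OF dz] DD c2])
      then show "- (S1 z - S2 z) = 2 * D1 z" using n2 Enz by (simp add: field_simps)
    qed
    then show False using n2_contra[OF n2 nz12] unfolding S1_def S2_def D1_def by simp
  qed
  define Sset where "Sset = (\<lambda>p. \<bar>w (fst p) (snd p)\<bar>) ` ({1,2::nat} \<times> {1..n})"
  have finS: "finite Sset" and neS: "Sset \<noteq> {}" using n1 by (auto simp: Sset_def)
  obtain i0 j0 where i0: "i0 \<in> {1,2}" and j0: "j0 \<in> {1..n}" and M0: "\<bar>w i0 j0\<bar> = Max Sset"
  proof -
    have "Max Sset \<in> Sset" by (rule Max_in[OF finS neS])
    then obtain pr where pr: "pr \<in> {1,2::nat} \<times> {1..n}" and pm: "Max Sset = \<bar>w (fst pr) (snd pr)\<bar>"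
      unfolding Sset_def by blast
    show thesis by (rule that[of "fst pr" "snd pr"]) (use pr pm in auto)
  qed
  have Mge: "\<bar>w i j\<bar> \<le> Max Sset" if "i \<in> {1,2}" "j \<in> {1..n}" for i j
  proof -
    have "(i, j) \<in> {1,2::nat} \<times> {1..n}" using that by auto
    then have "\<bar>w i j\<bar> \<in> Sset" unfolding Sset_def by (rule rev_image_eqI) simp
    then show ?thesis by (rule Max_ge[OF finS])
  qed
  have Wres: "(?q1 = ?q2 + 1 \<or> ?q2 = ?q1 + 1) \<and> (n = 1 \<longrightarrow> w 2 1 = - w 1 1)"
  proof (cases "i0 = 1")
    case True
    have mx: "\<forall>j\<in>{1..n}. \<bar>w 1 j\<bar> \<le> \<bar>w 1 j0\<bar> \<and> \<bar>w 2 j\<bar> \<le> \<bar>w 1 j0\<bar>"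
      using Mge M0 True by auto
    have "(?q1 = ?q2 + 1 \<or> ?q2 = ?q1 + 1) \<and> (\<exists>j\<in>{1..n}. w 2 j = - w 1 j0)"
      by (rule W_arg[OF st' qne j0 mx nz12 disj])
    then show ?thesis using j0 by auto
  next
    case False
    then have i2: "i0 = 2" using i0 by auto
    have st2: "\<forall>z r. dm n (w 2) (w 1) z \<longrightarrow> Rr n (w 2) z r + Rr n (w 1) z r = r ^ ?q2 + r ^ ?q1"
      using st' by (simp add: dm_sym add.commute)
    have mx: "\<forall>j\<in>{1..n}. \<bar>w 2 j\<bar> \<le> \<bar>w 2 j0\<bar> \<and> \<bar>w 1 j\<bar> \<le> \<bar>w 2 j0\<bar>"
      using Mge M0 i2 by auto
    have nz21: "\<forall>j\<in>{1..n}. w 2 j \<noteq> 0 \<and> w 1 j \<noteq> 0" using nz12 by auto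
    have disj2: "\<forall>j1\<in>{1..n}. \<forall>j2\<in>{1..n}. w 2 j1 \<noteq> w 1 j2" using disj by metis
    have "(?q2 = ?q1 + 1 \<or> ?q1 = ?q2 + 1) \<and> (\<exists>j\<in>{1..n}. w 1 j = - w 2 j0)"
      by (rule W_arg[OF st2 qne[symmetric] j0 mx nz21 disj2])
    then show ?thesis using j0 by auto
  qed
  have n13: "n = 1 \<or> n = 3" using top2 qs Wres by arith
  then show ?thesis
  proof
    assume n: "n = 1"
    have "w 1 1 \<noteq> 0" using nz n by auto
    then show ?thesis using L1_build[OF n _ _ e2] Wres n by blast
  next
    assume n: "n = 3"
    have qq: "(?q1 = 1 \<and> ?q2 = 2) \<or> (?q1 = 2 \<and> ?q2 = 1)" using qs Wres n by arith
    have "\<forall>z. dm n (w 1) (w 2) z \<longrightarrow> S1 z - S2 z = D1 z"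
    proof (intro allI impI)
      fix z assume dz: "dm n (w 1) (w 2) z"
      have c1: "E / D1 z * (-1) ^ n + E / D2 z * (-1) ^ n = 0" using CI[OF dz] qq n by auto
      have c2: "E / D1 z * ((-1) ^ (n - 1) * S1 z) + E / D2 z * ((-1) ^ (n - 1) * S2 z) = E"
        using CI[OF dz] qq n by auto
      have DD: "D2 z = - D1 z" by (rule alg1[OF Enz pm Dnz[OF dz] c1])
      have "(-1) ^ (n - 1) * (S1 z - S2 z) = E * D1 z / E" by (rule alg2[OF Enz Dnz(1)[OF dz] DD c2])
      then show "S1 z - S2 z = D1 z" using n Enz by simp
    qed
    then have "image_mset (\<lambda>j. - w 1 j) (mset_set {1..3}) = image_mset (w 2) (mset_set {1..3}) \<and> w 1 1 + w 1 2 + w 1 3 = 0"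
      using n3_mset[OF n nz12] unfolding S1_def S2_def D1_def by simp
    then have ms: "image_mset (\<lambda>j. - w 1 j) (mset_set {1..3}) = image_mset (w 2) (mset_set {1..3})"
      and s0: "w 1 1 + w 1 2 + w 1 3 = 0" by auto
    obtain p where p: "p permutes {1..3}" and pw: "\<forall>x\<in>{1..3}. - w 1 x = w 2 (p x)"
      using image_mset_eq_implies_permutes[OF _ ms] by blast
    have "w 1 1 \<noteq> 0" "w 1 2 \<noteq> 0" "w 1 3 \<noteq> 0" using nz n by auto
    then show ?thesis using S3_build[OF n p pw _ _ _ s0 e2] by blast
  qed
qed

lemma tau_cases:
  assumes "\<tau> permutes {1,2::nat}"
  shows "(\<tau> 1 = 1 \<and> \<tau> 2 = 2) \<or> (\<tau> 1 = 2 \<and> \<tau> 2 = 1)"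
proof -
  have "\<tau> 1 \<in> {1,2}" "\<tau> 2 \<in> {1,2}" using permutes_in_image[OF assms] by auto
  moreover have "\<tau> 1 \<noteq> \<tau> 2" using permutes_inj[OF assms] by (metis inj_eq numeral_One numeral_eq_iff semiring_norm(85))
  ultimately show ?thesis by auto
qed

lemma rearr_eps:
  assumes "rearr n w eps w' eps'"
  shows "(eps' 1 = eps 1 \<and> eps' 2 = eps 2) \<or> (eps' 1 = eps 2 \<and> eps' 2 = eps 1)"
proof -
  obtain \<tau> \<sigma> where t: "\<tau> permutes {1,2::nat}" and ee: "\<forall>i\<in>{1,2}. eps' i = eps (\<tau> i)"
    using assms unfolding rearr_def by blast
  from tau_cases[OF t] ee show ?thesis by auto
qed

lemma excl:
  assumes e: "\<forall>i\<in>{1,2}. eps i \<in> {1, -1}"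
  shows "\<not> (case_Z n w eps \<and> case_L1 n w eps)" "\<not> (case_Z n w eps \<and> case_S3 n w eps)"
    "\<not> (case_L1 n w eps \<and> case_S3 n w eps)"
proof -
  have Z: "eps 1 = - eps 2" if cz: "case_Z n w eps"
  proof -
    obtain w' eps' where r: "rearr n w eps w' eps'" and q: "eps' 1 = - eps' 2"
      using cz unfolding case_Z_def by blast
    from rearr_eps[OF r] q show ?thesis by auto
  qed
  have L: "eps 1 = eps 2" if cz: "case_L1 n w eps"
  proof -
    obtain w' eps' where r: "rearr n w eps w' eps'" and q: "eps' 1 = eps' 2"
      using cz unfolding case_L1_def by blast
    from rearr_eps[OF r] q show ?thesis by auto
  qed
  have S: "eps 1 = eps 2" if cz: "case_S3 n w eps"
  proof -
    obtain w' eps' where r: "rearr n w eps w' eps'" and q: "eps' 1 = eps' 2"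
      using cz unfolding case_S3_def by blast
    from rearr_eps[OF r] q show ?thesis by auto
  qed
  have ne: "\<not> (eps 1 = - eps 2 \<and> eps 1 = eps 2)" using e by auto
  show "\<not> (case_Z n w eps \<and> case_L1 n w eps)" using Z L ne by blast
  show "\<not> (case_Z n w eps \<and> case_S3 n w eps)" using Z S ne by blast
  show "\<not> (case_L1 n w eps \<and> case_S3 n w eps)" unfolding case_L1_def case_S3_def by auto
qed

theorem mainTheorem5:
  fixes n :: nat and w :: "nat \<Rightarrow> nat \<Rightarrow> int" and eps :: "nat \<Rightarrow> int"
  assumes "n \<ge> 1"
    and "\<forall>i\<in>{1,2}. \<forall>j\<in>{1..n}. w i j \<noteq> 0"
    and "\<forall>i\<in>{1,2}. eps i \<in> {1, -1}"
    and "\<forall>x y. T_const n w eps x y"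
  shows "(case_Z n w eps \<or> case_L1 n w eps \<or> case_S3 n w eps) \<and>
         \<not> (case_Z n w eps \<and> case_L1 n w eps) \<and>
         \<not> (case_Z n w eps \<and> case_S3 n w eps) \<and>
         \<not> (case_L1 n w eps \<and> case_S3 n w eps)"
proof -
  have "eps 2 = - eps 1 \<or> eps 2 = eps 1" using assms(3) by auto
  then have "case_Z n w eps \<or> case_L1 n w eps \<or> case_S3 n w eps"
    using opp_case[OF assms] eq_case[OF assms] by blast
  then show ?thesis using excl[OF assms(3)] by blast
qed

end
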